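(* Let $(M,d)$ be a bounded metric space with uniform relative normal structure such that $\mathcal A(M)$ is compact, and let $\mathcal S$ be a group acting on $M$ such that each $s\in\mathcal S$ is orbit-nonexpansive. Then there is $x\in M$ with $s(x)=x$ for all $s\in\mathcal S$.
   Context: For a metric space $(M,d)$, a mapping $T:M\to M$ and $x\in M$, the orbit of $x$ is $o_T(x)=\{x\}\cup\{T^nx:n\in\mathbb N\}$. For $x\in M$ and bounded $A\subseteq M$, $D(x,A)=\sup\{d(x,a):a\in A\}$ and $\delta(A)=\sup\{d(x,y):x,y\in A\}$. $T$ is orbit-nonexpansive if $d(Tx,Ty)\le D(x,o_T(y))$ for all $x,y\in M$. A group $\mathcal S$ acts on $M$ if each $s\in\mathcal S$ defines a map $M\to M$, the identity acts as the identity map, and $(s\cdot t)(x)=s(t(x))$. A subset of $M$ is admissible if it is an intersection of closed balls of $M$; $\mathcal A(M)$ denotes the family of admissible sets. $\mathcal A(M)$ is compact if every subfamily of $\mathcal A(M)$ all of whose finite intersections are nonempty has nonempty intersection. $(M,d)$ has uniform relative normal structure (URNS) if there is $c\in(0,1)$ such that for every admissible $A$ with $\delta(A)>0$: (i) there exists $z_A\in M$ with $D(z_A,A)\le c\,\delta(A)$; and (ii) every $x\in M$ with $D(x,A)\le c\,\delta(A)$ satisfies $d(x,z_A)\le c\,\delta(A)$. *)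

theory Defs
  imports "HOL-Analysis.Analysis" "HOL-Algebra.Group"
begin

text \<open>The metric space (M,d) is the whole carrier of a type of class metric_space.\<close>

definition orbit_of :: "('a \<Rightarrow> 'a) \<Rightarrow> 'a \<Rightarrow> 'a set" where
  "orbit_of T x = {x} \<union> {(T ^^ n) x | n. n \<ge> 1}"

definition Dsup :: "'a::metric_space \<Rightarrow> 'a set \<Rightarrow> real" where
  "Dsup x A = (SUP a\<in>A. dist x a)"

definition diam_sup :: "'a::metric_space set \<Rightarrow> real" where
  "diam_sup A = (SUP p\<in>A \<times> A. dist (fst p) (snd p))"

definition orbit_nonexpansive :: "('a::metric_space \<Rightarrow> 'a) \<Rightarrow> bool" where
  "orbit_nonexpansive T \<longleftrightarrow> (\<forall>x y. dist (T x) (T y) \<le> Dsup x (orbit_of T y))"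

definition admissible :: "'a::metric_space set \<Rightarrow> bool" where
  "admissible A \<longleftrightarrow> (\<exists>F. F \<subseteq> {cball x r | x r. True} \<and> A = \<Inter>F)"

definition admissible_compact :: "'a::metric_space itself \<Rightarrow> bool" where
  "admissible_compact _ \<longleftrightarrow>
     (\<forall>\<F> :: 'a set set. (\<forall>A\<in>\<F>. admissible A) \<and>
        (\<forall>\<G>. \<G> \<subseteq> \<F> \<and> finite \<G> \<longrightarrow> \<Inter>\<G> \<noteq> {}) \<longrightarrow> \<Inter>\<F> \<noteq> {})"

definition URNS :: "'a::metric_space itself \<Rightarrow> bool" where
  "URNS _ \<longleftrightarrow> (\<exists>c::real. 0 < c \<and> c < 1 \<and>
     (\<forall>A :: 'a set. admissible A \<and> diam_sup A > 0 \<longrightarrow>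
        (\<exists>z. Dsup z A \<le> c * diam_sup A \<and>
             (\<forall>x. Dsup x A \<le> c * diam_sup A \<longrightarrow> dist x z \<le> c * diam_sup A))))"

definition group_action_on :: "('g, 'b) monoid_scheme \<Rightarrow> ('g \<Rightarrow> 'a \<Rightarrow> 'a) \<Rightarrow> bool" where
  "group_action_on G \<phi> \<longleftrightarrow> group G \<and> \<phi> \<one>\<^bsub>G\<^esub> = id \<and>
     (\<forall>s\<in>carrier G. \<forall>t\<in>carrier G. \<phi> (s \<otimes>\<^bsub>G\<^esub> t) = \<phi> s \<circ> \<phi> t)"

end

theory Submission
  imports Defs
begin

lemma bound_ex:
  assumes "bounded (UNIV :: 'a::metric_space set)"
  shows "\<exists>B. \<forall>x y::'a. dist x y \<le> B"
proof -
  obtain a e where h: "\<forall>y::'a. dist a y \<le> e" using assms unfolding bounded_def by blast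
  have "dist x y \<le> 2 * e" for x y :: 'a
    using dist_triangle2[of x y a] h[rule_format, of x] h[rule_format, of y]
    by (simp add: dist_commute)
  then show ?thesis by blast
qed

lemma DL1:
  assumes "bounded (UNIV :: 'a::metric_space set)" "a \<in> A"
  shows "dist (x::'a) a \<le> Dsup x A"
proof -
  obtain B where "\<forall>x y::'a. dist x y \<le> B" using bound_ex[OF assms(1)] by blast
  then have "bdd_above ((\<lambda>a. dist x a) ` A)" by (auto simp: bdd_above_def)
  then show ?thesis unfolding Dsup_def using assms(2) by (rule cSUP_upper2) simp
qed

lemma DL2:
  assumes "A \<noteq> {}" "\<forall>a\<in>A. dist (x::'a::metric_space) a \<le> r"
  shows "Dsup x A \<le> r"
  unfolding Dsup_def using assms by (intro cSUP_least) auto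

lemma diam1:
  assumes "bounded (UNIV :: 'a::metric_space set)" "a \<in> A" "b \<in> A"
  shows "dist (a::'a) b \<le> diam_sup A"
proof -
  obtain B where "\<forall>x y::'a. dist x y \<le> B" using bound_ex[OF assms(1)] by blast
  then have "bdd_above ((\<lambda>p. dist (fst p) (snd p)) ` (A \<times> A))" by (auto simp: bdd_above_def)
  moreover have "(a, b) \<in> A \<times> A" using assms by auto
  ultimately show ?thesis unfolding diam_sup_def by (metis (no_types, lifting) cSUP_upper fst_conv snd_conv)
qed

lemma diam2:
  assumes "A \<noteq> {}" "\<forall>a\<in>A. \<forall>b\<in>A. dist (a::'a::metric_space) b \<le> r"
  shows "diam_sup A \<le> r"
  unfolding diam_sup_def using assms by (intro cSUP_least) auto

lemma Dsup_mono:
  assumes "bounded (UNIV :: 'a::metric_space set)" "A \<subseteq> C" "A \<noteq> {}"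
  shows "Dsup (x::'a) A \<le> Dsup x C"
  using assms by (intro DL2) (auto intro: DL1)

lemma act_mult:
  assumes "group_action_on G \<phi>" "s \<in> carrier G" "t \<in> carrier G"
  shows "\<phi> s (\<phi> t x) = \<phi> (s \<otimes>\<^bsub>G\<^esub> t) x"
  using assms unfolding group_action_on_def by simp

lemma act_one:
  assumes "group_action_on G \<phi>"
  shows "\<phi> \<one>\<^bsub>G\<^esub> x = x"
  using assms unfolding group_action_on_def by simp

lemma act_pow:
  assumes "group_action_on G \<phi>" "s \<in> carrier G"
  shows "(\<phi> s ^^ n) x = \<phi> (s [^]\<^bsub>G\<^esub> n) x"
proof (induction n arbitrary: x)
  case 0
  then show ?case using act_one[OF assms(1)] by simp
next
  case (Suc n)
  have grp: "group G" using assms(1) unfolding group_action_on_def by simp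
  have "(\<phi> s ^^ Suc n) x = (\<phi> s ^^ n) (\<phi> s x)" by (simp only: funpow_Suc_right comp_def)
  also have "\<dots> = \<phi> (s [^]\<^bsub>G\<^esub> n) (\<phi> s x)" using Suc by simp
  also have "\<dots> = \<phi> (s [^]\<^bsub>G\<^esub> Suc n) x"
    using act_mult[OF assms(1) _ assms(2)] grp assms(2)
    by (simp add: group.is_monoid monoid.nat_pow_closed)
  finally show ?case .
qed

lemma orbit_sub:
  assumes "group_action_on G \<phi>" "s \<in> carrier G"
  shows "orbit_of (\<phi> s) y \<subseteq> (\<lambda>t. \<phi> t y) ` carrier G"
proof -
  have grp: "group G" using assms(1) unfolding group_action_on_def by simp
  have "y \<in> (\<lambda>t. \<phi> t y) ` carrier G"
    using act_one[OF assms(1), of y] grp by (metis group.is_monoid image_eqI monoid.one_closed)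
  moreover have "(\<phi> s ^^ n) y \<in> (\<lambda>t. \<phi> t y) ` carrier G" for n
    using act_pow[OF assms] grp assms(2) by (simp add: group.is_monoid monoid.nat_pow_closed)
  ultimately show ?thesis unfolding orbit_of_def by blast
qed

lemma orb_ne:
  assumes "group_action_on G \<phi>"
  shows "y \<in> (\<lambda>t. \<phi> t y) ` carrier G"
proof -
  have grp: "group G" using assms(1) unfolding group_action_on_def by simp
  show ?thesis
    using act_one[OF assms(1), of y] grp by (metis group.is_monoid image_eqI monoid.one_closed)
qed

lemma invar:
  fixes \<phi> :: "'g \<Rightarrow> 'a::metric_space \<Rightarrow> 'a"
  assumes bd: "bounded (UNIV :: 'a set)" and act: "group_action_on G \<phi>"
    and ne: "\<forall>s\<in>carrier G. orbit_nonexpansive (\<phi> s)" and s: "s \<in> carrier G"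
  shows "Dsup (\<phi> s x) ((\<lambda>t. \<phi> t y) ` carrier G) \<le> Dsup x ((\<lambda>t. \<phi> t y) ` carrier G)"
proof (rule DL2)
  show "(\<lambda>t. \<phi> t y) ` carrier G \<noteq> {}" using orb_ne[OF act] by blast
  have grp: "group G" using act unfolding group_action_on_def by simp
  show "\<forall>a\<in>(\<lambda>t. \<phi> t y) ` carrier G. dist (\<phi> s x) a \<le> Dsup x ((\<lambda>t. \<phi> t y) ` carrier G)"
  proof
    fix a assume "a \<in> (\<lambda>t. \<phi> t y) ` carrier G"
    then obtain t where t: "t \<in> carrier G" "a = \<phi> t y" by blast
    define u where "u = inv\<^bsub>G\<^esub> s \<otimes>\<^bsub>G\<^esub> t"
    have u: "u \<in> carrier G" using grp s t unfolding u_def by (meson group.inv_closed group.is_monoid monoid.m_closed)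
    have "s \<otimes>\<^bsub>G\<^esub> u = t" using group.inv_solve_left[OF grp u s t(1)] unfolding u_def
      by simp
    then have a: "a = \<phi> s (\<phi> u y)" using act_mult[OF act s u] t by simp
    have "dist (\<phi> s x) a \<le> Dsup x (orbit_of (\<phi> s) (\<phi> u y))"
      using ne s a unfolding orbit_nonexpansive_def by simp
    also have "\<dots> \<le> Dsup x ((\<lambda>t. \<phi> t (\<phi> u y)) ` carrier G)"
      by (rule Dsup_mono[OF bd orbit_sub[OF act s]]) (simp add: orbit_of_def)
    also have "(\<lambda>t. \<phi> t (\<phi> u y)) ` carrier G \<subseteq> (\<lambda>t. \<phi> t y) ` carrier G"
      using act_mult[OF act _ u] grp u by (auto simp: group.is_monoid monoid.m_closed)
    then have "Dsup x ((\<lambda>t. \<phi> t (\<phi> u y)) ` carrier G) \<le> Dsup x ((\<lambda>t. \<phi> t y) ` carrier G)"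
      using orb_ne[OF act] by (intro Dsup_mono[OF bd]) auto
    finally show "dist (\<phi> s x) a \<le> Dsup x ((\<lambda>t. \<phi> t y) ` carrier G)" .
  qed
qed

lemma step:
  fixes \<phi> :: "'g \<Rightarrow> 'a::metric_space \<Rightarrow> 'a"
  assumes bd: "bounded (UNIV :: 'a set)" and act: "group_action_on G \<phi>"
    and ne: "\<forall>s\<in>carrier G. orbit_nonexpansive (\<phi> s)"
    and hc: "\<forall>A :: 'a set. admissible A \<and> diam_sup A > 0 \<longrightarrow>
        (\<exists>z. Dsup z A \<le> c * diam_sup A \<and>
             (\<forall>x. Dsup x A \<le> c * diam_sup A \<longrightarrow> dist x z \<le> c * diam_sup A))"
    and pos: "diam_sup ((\<lambda>t. \<phi> t x) ` carrier G) > 0"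
  shows "\<exists>z. diam_sup ((\<lambda>t. \<phi> t z) ` carrier G) \<le> c * diam_sup ((\<lambda>t. \<phi> t x) ` carrier G)
     \<and> dist z x \<le> c * diam_sup ((\<lambda>t. \<phi> t x) ` carrier G)"
proof -
  define Ob where "Ob = (\<lambda>t. \<phi> t x) ` carrier G"
  define d where "d = diam_sup Ob"
  define A where "A = \<Inter>{cball p r | p r. Ob \<subseteq> cball p r}"
  have xO: "x \<in> Ob" unfolding Ob_def by (rule orb_ne[OF act])
  have OA: "Ob \<subseteq> A" unfolding A_def by blast
  have Ane: "A \<noteq> {}" using OA xO by blast
  have admA: "admissible A" unfolding admissible_def A_def
    by (rule exI[of _ "{cball p r | p r. Ob \<subseteq> cball p r}"]) blast
  have ballA: "A \<subseteq> cball p r" if "Ob \<subseteq> cball p r" for p r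
    using that unfolding A_def by blast
  have dA: "diam_sup A = d"
  proof (rule antisym)
    have "Ob \<subseteq> cball a d" if "a \<in> A" for a
    proof -
      have "a \<in> cball q d" if "q \<in> Ob" for q
      proof -
        have "Ob \<subseteq> cball q d" using diam1[OF bd that] unfolding d_def by auto
        then show ?thesis using ballA \<open>a \<in> A\<close> by blast
      qed
      then show ?thesis by (auto simp: dist_commute)
    qed
    then have "\<forall>a\<in>A. \<forall>b\<in>A. dist a b \<le> d" using ballA by (meson mem_cball subsetD)
    then show "diam_sup A \<le> d" using Ane by (intro diam2)
    show "d \<le> diam_sup A" unfolding d_def using xO OA by (intro diam2) (auto intro: diam1[OF bd])
  qed
  have "admissible A \<and> diam_sup A > 0" using admA dA pos unfolding d_def Ob_def by simp
  from hc[rule_format, OF this] obtain z where z1: "Dsup z A \<le> c * d" and z2: "\<And>y. Dsup y A \<le> c * d \<Longrightarrow> dist y z \<le> c * d"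
    unfolding dA by blast
  have zO: "Dsup z Ob \<le> c * d" using Dsup_mono[OF bd OA, of z] xO z1 by (metis empty_iff order_trans)
  have close: "dist z (\<phi> s z) \<le> c * d" if s: "s \<in> carrier G" for s
  proof -
    have "Dsup (\<phi> s z) Ob \<le> c * d" using invar[OF bd act ne s, of z x] zO unfolding Ob_def by simp
    then have "Ob \<subseteq> cball (\<phi> s z) (c * d)"
    proof -
      assume h: "Dsup (\<phi> s z) Ob \<le> c * d"
      show ?thesis
      proof
        fix q assume "q \<in> Ob"
        then have "dist (\<phi> s z) q \<le> Dsup (\<phi> s z) Ob" by (rule DL1[OF bd])
        then show "q \<in> cball (\<phi> s z) (c * d)" using h by simp
      qed
    qed
    then have "A \<subseteq> cball (\<phi> s z) (c * d)" by (rule ballA)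
    then have "Dsup (\<phi> s z) A \<le> c * d" using Ane by (intro DL2) auto
    then show ?thesis using z2 by (metis dist_commute)
  qed
  define Z where "Z = (\<lambda>t. \<phi> t z) ` carrier G"
  have Zne: "Z \<noteq> {}" using orb_ne[OF act] unfolding Z_def by blast
  have zZ: "Dsup z Z \<le> c * d" using Zne proof (rule DL2)
    show "\<forall>a\<in>Z. dist z a \<le> c * d" unfolding Z_def using close by blast
  qed
  have "diam_sup Z \<le> c * d"
  proof (rule diam2[OF Zne], intro ballI)
    fix a b assume a: "a \<in> Z" and b: "b \<in> Z"
    then obtain s where s: "s \<in> carrier G" "a = \<phi> s z" unfolding Z_def by blast
    have "dist a b \<le> Dsup a Z" using DL1[OF bd b] .
    also have "\<dots> \<le> Dsup z Z" using invar[OF bd act ne s(1), of z z] s(2) unfolding Z_def by simp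
    finally show "dist a b \<le> c * d" using zZ by simp
  qed
  moreover have "dist z x \<le> c * d" using DL1[OF bd xO, of z] zO by simp
  ultimately show ?thesis unfolding Z_def d_def Ob_def by blast
qed

lemma small_zero:
  fixes a c K :: real
  assumes "0 < c" "c < 1" "0 \<le> K" "\<And>n. a \<le> c ^ n * K" "0 \<le> a"
  shows "a = 0"
proof (rule ccontr)
  assume "a \<noteq> 0"
  then have a: "a > 0" using assms by simp
  then obtain n where n: "c ^ n < a / (K + 1)" using real_arch_pow_inv[of "a / (K + 1)" c] assms by auto
  have "c ^ n * K \<le> c ^ n * (K + 1)" using assms by simp
  also have "\<dots> < a" using n assms by (simp add: pos_less_divide_eq)
  finally show False using assms(4)[of n] by simp
qed

lemma r_ident:
  fixes c d :: real
  assumes "c < 1"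
  shows "c ^ Suc n * d + c ^ Suc (Suc n) * d / (1 - c) = c ^ Suc n * d / (1 - c)"
  using assms by (simp add: field_simps)

theorem corollary4p7:
  fixes G :: "('g, 'b) monoid_scheme" and \<phi> :: "'g \<Rightarrow> 'a::metric_space \<Rightarrow> 'a"
  assumes "bounded (UNIV :: 'a set)"
    and "URNS TYPE('a)"
    and "admissible_compact TYPE('a)"
    and "group_action_on G \<phi>"
    and "\<forall>s\<in>carrier G. orbit_nonexpansive (\<phi> s)"
  shows "\<exists>x::'a. \<forall>s\<in>carrier G. \<phi> s x = x"
proof -
  note bd = assms(1) and act = assms(4) and ne = assms(5)
  from assms(2) obtain c :: real where c: "0 < c" "c < 1" and hc: "\<forall>A :: 'a set. admissible A \<and> diam_sup A > 0 \<longrightarrow>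
        (\<exists>z. Dsup z A \<le> c * diam_sup A \<and>
             (\<forall>x. Dsup x A \<le> c * diam_sup A \<longrightarrow> dist x z \<le> c * diam_sup A))"
    unfolding URNS_def by blast
  define \<delta> where "\<delta> = (\<lambda>x. diam_sup ((\<lambda>t. \<phi> t x) ` carrier G))"
  have dist_orb: "dist (\<phi> s x) x \<le> \<delta> x" if "s \<in> carrier G" for s x
    unfolding \<delta>_def using that orb_ne[OF act, of x] by (intro diam1[OF bd]) auto
  show ?thesis
  proof (rule ccontr)
    assume nf: "\<not> ?thesis"
    have pos: "\<delta> x > 0" for x
    proof (rule ccontr)
      assume "\<not> \<delta> x > 0"
      then have "\<forall>s\<in>carrier G. \<phi> s x = x" using dist_orb by (meson dist_le_zero_iff not_less order_trans)
      with nf show False by blast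
    qed
    have "\<forall>x. \<exists>z. \<delta> z \<le> c * \<delta> x \<and> dist z x \<le> c * \<delta> x"
      using step[OF bd act ne hc] pos unfolding \<delta>_def by blast
    then obtain f where f: "\<And>x. \<delta> (f x) \<le> c * \<delta> x" "\<And>x. dist (f x) x \<le> c * \<delta> x" by metis
    define xs where "xs = (\<lambda>n. (f ^^ n) undefined)"
    have xsS: "xs (Suc n) = f (xs n)" for n unfolding xs_def by simp
    define d0 where "d0 = \<delta> (xs 0)"
    have d0: "0 \<le> d0" using pos unfolding d0_def by (simp add: less_imp_le)
    have dn: "\<delta> (xs n) \<le> c ^ n * d0" for n
    proof (induction n)
      case 0 then show ?case unfolding d0_def by simp
    next
      case (Suc n)
      have "\<delta> (xs (Suc n)) \<le> c * \<delta> (xs n)" using f(1) xsS by simp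
      also have "\<dots> \<le> c * (c ^ n * d0)" using Suc c by (simp add: mult_left_mono)
      finally show ?case by simp
    qed
    have stepd: "dist (xs (Suc n)) (xs n) \<le> c ^ Suc n * d0" for n
    proof -
      have "dist (xs (Suc n)) (xs n) \<le> c * \<delta> (xs n)" using f(2) xsS by simp
      also have "\<dots> \<le> c * (c ^ n * d0)" using dn c by (simp add: mult_left_mono)
      finally show ?thesis by simp
    qed
    define r where "r = (\<lambda>n. c ^ Suc n * d0 / (1 - c))"
    have r0: "0 \<le> r n" for n unfolding r_def using c d0 by simp
    define B where "B = (\<lambda>n. cball (xs n) (r n))"
    have nest: "B (Suc n) \<subseteq> B n" for n
    proof
      fix y assume "y \<in> B (Suc n)"
      then have y: "dist (xs (Suc n)) y \<le> r (Suc n)" unfolding B_def by simp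
      have "dist (xs n) y \<le> dist (xs n) (xs (Suc n)) + dist (xs (Suc n)) y" by (rule dist_triangle)
      also have "\<dots> \<le> c ^ Suc n * d0 + r (Suc n)" using stepd[of n] y by (simp add: dist_commute)
      also have "\<dots> = r n" unfolding r_def using r_ident[OF c(2)] by simp
      finally show "y \<in> B n" unfolding B_def by simp
    qed
    have anti: "B n \<subseteq> B m" if "m \<le> n" for m n
      using lift_Suc_antimono_le[of B, OF nest that] .
    have xsB: "xs n \<in> B n" for n unfolding B_def using r0 by simp
    have "\<Inter> (range B) \<noteq> {}"
    proof -
      have adm: "\<forall>A\<in>range B. admissible A"
        unfolding admissible_def B_def
        by (auto intro!: exI[of _ "{cball (xs n) (r n)}" for n])
      have fin: "\<forall>\<G>. \<G> \<subseteq> range B \<and> finite \<G> \<longrightarrow> \<Inter>\<G> \<noteq> {}"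
      proof (intro allI impI)
        fix \<G> assume h: "\<G> \<subseteq> range B \<and> finite \<G>"
        then obtain I where I: "finite I" "\<G> = B ` I" by (meson finite_subset_image)
        define N where "N = Max (insert 0 I)"
        have "xs N \<in> B i" if "i \<in> I" for i
          using anti[of i N] xsB[of N] that I(1) unfolding N_def by auto
        then have "xs N \<in> \<Inter>\<G>" using I by auto
        then show "\<Inter>\<G> \<noteq> {}" by blast
      qed
      show ?thesis using assms(3) adm fin unfolding admissible_compact_def by blast
    qed
    then obtain xst where xst: "\<And>n. xst \<in> B n" by blast
    have dxst: "dist (xs n) xst \<le> r n" for n using xst[of n] unfolding B_def by simp
    have fixed: "\<phi> s xst = xst" if s: "s \<in> carrier G" for s
    proof -
      have bound: "dist (\<phi> s xst) xst \<le> c ^ n * (2 * d0 * (c / (1 - c) + 1))" for n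
      proof -
        define Ob where "Ob = (\<lambda>t. \<phi> t (xs n)) ` carrier G"
        have "\<forall>p\<in>Ob. dist xst p \<le> r n + c ^ n * d0"
        proof
          fix p assume p: "p \<in> Ob"
          have "dist xst p \<le> dist xst (xs n) + dist (xs n) p" by (rule dist_triangle)
          also have "dist (xs n) p \<le> \<delta> (xs n)" unfolding \<delta>_def
            using p orb_ne[OF act, of "xs n"] unfolding Ob_def by (intro diam1[OF bd]) auto
          finally show "dist xst p \<le> r n + c ^ n * d0" using dn[of n] dxst[of n]
            by (simp add: dist_commute)
        qed
        then have D: "Dsup xst Ob \<le> r n + c ^ n * d0"
          using orb_ne[OF act, of "xs n"] unfolding Ob_def by (intro DL2) auto
        have "dist (\<phi> s xst) (\<phi> s (xs n)) \<le> Dsup xst (orbit_of (\<phi> s) (xs n))"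
          using ne s unfolding orbit_nonexpansive_def by simp
        also have "\<dots> \<le> Dsup xst Ob" unfolding Ob_def
          by (rule Dsup_mono[OF bd orbit_sub[OF act s]]) (simp add: orbit_of_def)
        finally have 1: "dist (\<phi> s xst) (\<phi> s (xs n)) \<le> r n + c ^ n * d0" using D by simp
        have 2: "dist (\<phi> s (xs n)) (xs n) \<le> c ^ n * d0" using dist_orb[OF s, of "xs n"] dn[of n] by simp
        have "dist (\<phi> s xst) xst \<le> dist (\<phi> s xst) (\<phi> s (xs n)) + dist (\<phi> s (xs n)) (xs n) + dist (xs n) xst"
          by (meson dist_triangle add_mono order_trans order_refl)
        also have "\<dots> \<le> 2 * r n + 2 * (c ^ n * d0)" using 1 2 dxst[of n] by simp
        also have "\<dots> = c ^ n * (2 * d0 * (c / (1 - c) + 1))" unfolding r_def by (simp add: field_simps)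
        finally show ?thesis .
      qed
      have "0 \<le> 2 * d0 * (c / (1 - c) + 1)" using c d0 by simp
      then have "dist (\<phi> s xst) xst = 0" using small_zero[OF c(1) c(2) _ bound] by simp
      then show ?thesis by simp
    qed
    with nf show False by blast
  qed
qed

end
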